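(* Let $d$, $n$, $r$ be positive integers with $\gcd(d,n)=1$ and $n$ odd. Let $s$ be an integer with $0\leqslant s\leqslant n-1$ and $s\equiv \langle -r/d\rangle_n+1\pmod 2$. Then $$ \sum_{k=s}^{n-1}\frac{(aq^r;q^d)_k\,(bq^{d-r};q^d)_k\,(q^d;q^{2d})_k\, q^{dk}}{(q^d;q^d)_{k-s}\,(q^d;q^d)_{k+s}\,(abq^{2d};q^{2d})_k} \equiv 0 \pmod{(1-aq^{r+d\langle -r/d\rangle_n})(1-bq^{d-r+d\langle (r-d)/d\rangle_n})}. $$
   Context: $a,b,q$ are indeterminates. The $q$-shifted factorial is $(x;q)_0=1$ and $(x;q)_m=(1-x)(1-xq)\cdots(1-xq^{m-1})$ for $m\geqslant1$. For a rational number $x$ and a positive integer $m$ such that the denominator of $x$ is coprime to $m$, $\langle x\rangle_m$ denotes the least non-negative residue of $x$ modulo $m$. For rational functions $A,B$ and a polynomial $P$ (in the indeterminates involved), $A\equiv B\pmod P$ means that $A-B=P\cdot C/D$ for polynomials $C,D$ with $D$ coprime to $P$. *)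

theory Defs
  imports "HOL-Computational_Algebra.Polynomial" "HOL-Computational_Algebra.Fraction_Field"
    "HOL-Number_Theory.Cong"
begin

text \<open>Polynomials in three indeterminates a, b, q over the rationals, realised as
  nested univariate polynomials; rational functions are their fraction field.\<close>

type_synonym mpoly3 = "rat poly poly poly"
type_synonym rfun3 = "mpoly3 fract"

definition emb :: "mpoly3 \<Rightarrow> rfun3" where "emb p = Fract p 1"

definition var_a :: rfun3 where "var_a = emb [:0, 1:]"
definition var_b :: rfun3 where "var_b = emb [:[:0, 1:]:]"
definition var_q :: rfun3 where "var_q = emb [:[:[:0, 1:]:]:]"

definition qpoch :: "rfun3 \<Rightarrow> rfun3 \<Rightarrow> nat \<Rightarrow> rfun3" where
  "qpoch x y m = (\<Prod>j<m. (1 - x * y ^ j))"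

text \<open>least non-negative residue of a rational x modulo m (denominator coprime to m)\<close>
definition lres :: "rat \<Rightarrow> nat \<Rightarrow> int" where
  "lres x m = (case quotient_of x of (p, e) \<Rightarrow>
      (THE t. 0 \<le> t \<and> t < int m \<and> [e * t = p] (mod int m)))"

text \<open>A \<equiv> B (mod P): A - B = P * C / D with polynomials C, D, D coprime to P.
  P is allowed to be a rational function written as N/M with N, M polynomials;
  D must be coprime to the numerator N (for P a polynomial this is the usual notion).\<close>
definition rcong :: "rfun3 \<Rightarrow> rfun3 \<Rightarrow> rfun3 \<Rightarrow> bool" where
  "rcong A B P \<longleftrightarrow> (\<exists>C D N M. M \<noteq> 0 \<and> D \<noteq> 0 \<and> P = emb N / emb M \<and> coprime D N \<and>
      A - B = P * emb C / emb D)"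

end

theory Submission
  imports Defs "HOL-Computational_Algebra.Polynomial_Factorial" "HOL-Computational_Algebra.Field_as_Ring"
begin


definition qp :: "'a::field \<Rightarrow> 'a \<Rightarrow> nat \<Rightarrow> 'a" where
  "qp x y m = (\<Prod>j<m. (1 - x * y ^ j))"

lemma qp_0[simp]: "qp x y 0 = 1" by (simp add: qp_def)
lemma qp_Suc: "qp x y (Suc m) = qp x y m * (1 - x * y ^ m)"
  by (simp add: qp_def)
lemma qp_Suc': "qp x y (Suc m) = (1 - x) * qp (x*y) y m"
proof (induction m)
  case 0 then show ?case by (simp add: qp_Suc)
next
  case (Suc m)
  have "qp x y (Suc (Suc m)) = qp x y (Suc m) * (1 - x * y ^ Suc m)" by (rule qp_Suc)
  also have "\<dots> = (1 - x) * (qp (x*y) y m * (1 - x*y*y^m))" using Suc by (simp add: mult_ac)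
  also have "\<dots> = (1 - x) * qp (x*y) y (Suc m)" by (simp add: qp_Suc)
  finally show ?case .
qed
lemma qp_zero: "i < m \<Longrightarrow> x * y^i = 1 \<Longrightarrow> qp x y m = 0"
  unfolding qp_def by (rule prod_zero) auto
lemma qp_nz: "(\<And>i. i<m \<Longrightarrow> x * y^i \<noteq> 1) \<Longrightarrow> qp x y m \<noteq> 0"
  unfolding qp_def by (subst prod_zero_iff) auto

lemma poly_id:
  fixes U M A Q S :: "'a::comm_ring_1"
  shows "U*(-(Q^2-M*S)*(Q^2*S-M)*(Q-A*M*U^2) - S*(A*M-Q^2)*(Q^2-M*U)*(Q-M*U))
       = M*((1-A*U)*(Q^2-M*U)*(1-Q*U^2)*Q*S - (S-U)*(1-S*U)*(Q-A*M*U^2)*Q^2)"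
  by (simp add: algebra_simps power2_eq_square)

lemma rat_id:
  fixes U M A Q S kap :: "'a::field"
  assumes "Q \<noteq> 0" "S \<noteq> 0" "A*M - Q^2 \<noteq> 0"
  shows "U*((-kap*(Q^2-M*S)*(Q^2*S-M)/(Q^2*S*(A*M-Q^2)))*(1 - A*M/Q*U^2) - kap*(1-M*U/Q^2)*(1-M*U/Q))
     = (kap*M/(A*M-Q^2))*((1-A*U)*(1-M*U/Q^2)*(1-Q*U^2) - (1-U/S)*(1-S*U)*(1-A*M/Q*U^2))"
proof -
  have e1: "U*((-kap*(Q^2-M*S)*(Q^2*S-M)/(Q^2*S*(A*M-Q^2)))*(1 - A*M/Q*U^2) - kap*(1-M*U/Q^2)*(1-M*U/Q))
     = kap/(Q^3*S*(A*M-Q^2)) * (U*(-(Q^2-M*S)*(Q^2*S-M)*(Q-A*M*U^2) - S*(A*M-Q^2)*(Q^2-M*U)*(Q-M*U)))"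
    using assms by (simp add: field_simps power2_eq_square power3_eq_cube)
  have e2: "(kap*M/(A*M-Q^2))*((1-A*U)*(1-M*U/Q^2)*(1-Q*U^2) - (1-U/S)*(1-S*U)*(1-A*M/Q*U^2))
     = kap/(Q^3*S*(A*M-Q^2)) * (M*((1-A*U)*(Q^2-M*U)*(1-Q*U^2)*Q*S - (S-U)*(1-S*U)*(Q-A*M*U^2)*Q^2))"
    using assms by (simp add: field_simps power2_eq_square power3_eq_cube)
  show ?thesis unfolding e1 e2 poly_id ..
qed

lemma scal_id:
  fixes U M A Q S kap rho c1 :: "'a::field"
  assumes "Q \<noteq> 0" "S \<noteq> 0" "A*M - Q^2 \<noteq> 0" "U \<noteq> 0" "1 - A*M/Q*U^2 \<noteq> 0"
    and rho: "rho = -kap*(Q^2-M*S)*(Q^2*S-M)/(Q^2*S*(A*M-Q^2))"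
    and c1: "c1 = kap*M/(A*M-Q^2)"
  shows "rho - kap*(1-M*U/Q^2)*(1-M*U/Q)/(1 - A*M/Q*U^2)
    = c1*((1-A*U)*(1-M*U/Q^2)*(1-Q*U^2)/(1 - A*M/Q*U^2) - (1-U/S)*(1-S*U))/U"
proof -
  have r: "U*(rho*(1 - A*M/Q*U^2) - kap*(1-M*U/Q^2)*(1-M*U/Q))
     = c1*((1-A*U)*(1-M*U/Q^2)*(1-Q*U^2) - (1-U/S)*(1-S*U)*(1-A*M/Q*U^2))"
    unfolding rho c1 by (rule rat_id[OF assms(1-3)])
  have g: "\<And>D k Y Z::'a. D \<noteq> 0 \<Longrightarrow> U \<noteq> 0 \<Longrightarrow> U*(rho*D - k) = c1*(Y - Z*D) \<Longrightarrow>
      rho - k/D = c1*(Y/D - Z)/U"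
  proof -
    fix D k Y Z :: 'a
    assume D: "D \<noteq> 0" and U: "U \<noteq> 0" and e: "U*(rho*D - k) = c1*(Y - Z*D)"
    have "rho - k/D = (rho*D - k)/D" using D by (simp add: field_simps)
    also have "\<dots> = (U*(rho*D - k))/(U*D)" using U by simp
    also have "\<dots> = c1*(Y - Z*D)/(U*D)" using e by simp
    also have "\<dots> = c1*((Y - Z*D)/D)/U" by simp
    also have "(Y - Z*D)/D = Y/D - Z" using D by (simp add: diff_divide_distrib)
    finally show "rho - k/D = c1*(Y/D - Z)/U" .
  qed
  show ?thesis using g[OF assms(5,4) r[unfolded mult.assoc[of kap]]] by (simp add: mult.assoc)
qed

definition hh :: "'a::field \<Rightarrow> 'a \<Rightarrow> nat \<Rightarrow> 'a \<Rightarrow> nat \<Rightarrow> 'a" where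
  "hh A Q s M j = qp A Q (s+j) * qp M Q (s+j) * qp Q (Q^2) (s+j) * Q^(s+j) /
     (qp Q Q j * qp Q Q (2*s+j) * qp (A*M*Q) (Q^2) (s+j))"

lemma powi_mult_pow: "(Q::'a::field) \<noteq> 0 \<Longrightarrow> Q powi a * Q ^ n = Q powi (a + int n)"
  by (simp add: power_int_add)
lemma powi_mult_powi: "(Q::'a::field) \<noteq> 0 \<Longrightarrow> Q powi a * Q powi b = Q powi (a + b)"
  by (simp add: power_int_add)

lemma tele:
  fixes A Q M :: "'a::field" and s j m :: nat
  assumes Q: "Q \<noteq> 0" and gQ: "\<forall>a b::nat. Q^a = Q^b \<longrightarrow> a = b"
    and gA: "\<forall>a b::nat. A * Q^a \<noteq> Q^b" and M: "M = 1 / Q^m"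
  defines "S \<equiv> Q^s"
  defines "kap \<equiv> (1 - A*M/Q)/((1-M/Q^2)*(1-M/Q))"
  defines "c1 \<equiv> kap*M/(A*M-Q^2)"
  defines "rho \<equiv> -kap*(Q^2-M*S)*(Q^2*S-M)/(Q^2*S*(A*M-Q^2))"
  defines "H \<equiv> (\<lambda>j. c1 * hh A Q s (M/Q^2) j * (1 - Q^j) * (1 - Q^(2*s+j)) / Q^(s+j))"
  shows "rho * hh A Q s (M/Q^2) j - hh A Q s M j = H (Suc j) - H j"
proof -
  define k where "k = s + j"
  define U where "U = Q^k"
  define V where "V = Q^j"
  have UV: "U = S*V" unfolding U_def S_def V_def k_def by (simp add: power_add)
  have Unz: "U \<noteq> 0" "S \<noteq> 0" "V \<noteq> 0" using Q unfolding U_def S_def V_def by auto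
  have gQn: "\<And>n::nat. n > 0 \<Longrightarrow> Q^n \<noteq> 1" using gQ by (metis power_0 less_irrefl)
  have gA': "\<And>a b. A * Q^a \<noteq> Q^b" using gA by blast
  have d1: "qp Q Q j \<noteq> 0"
    by (rule qp_nz) (metis gQn power_Suc zero_less_Suc)
  have d2: "qp Q Q (2*s+j) \<noteq> 0"
    by (rule qp_nz) (metis gQn power_Suc zero_less_Suc)
  have eAMQ: "\<And>i. A*M*Q*(Q^2)^i = A*Q^(2*i+1) / Q^m"
    unfolding M by (simp add: power_mult[symmetric] power_add)
  have eAMQ': "\<And>i. A*M/Q*(Q^2)^i = A*Q^(2*i) / Q^(m+1)"
    unfolding M by (simp add: power_mult[symmetric] power_add)
  have z1: "\<And>i. A*M*Q*(Q^2)^i \<noteq> 1" proof -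
    fix i show "A*M*Q*(Q^2)^i \<noteq> 1" unfolding eAMQ using Q gA'[of "2*i+1" m] by simp
  qed
  have z2: "\<And>i. A*M/Q*(Q^2)^i \<noteq> 1" proof -
    fix i show "A*M/Q*(Q^2)^i \<noteq> 1" unfolding eAMQ' using Q gA'[of "2*i" "m+1"] by simp
  qed
  have eMQ: "A*(M/Q^2)*Q = A*M/Q" using Q by (simp add: power2_eq_square)
  have z: "qp (A*(M/Q^2)*Q) (Q^2) k \<noteq> 0" unfolding eMQ by (rule qp_nz) (rule z2)
  have zm: "qp (A*M*Q) (Q^2) k \<noteq> 0" by (rule qp_nz) (rule z1)
  have n1: "1 - M/Q^2 \<noteq> 0" using gQn[of "m+2"] Q unfolding M by (auto simp: power_add power2_eq_square mult_ac)
  have n2: "1 - M/Q \<noteq> 0" using gQn[of "m+1"] Q unfolding M by (auto simp: power_add mult_ac)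
  have n3: "1 - A*M/Q \<noteq> 0" using z2[of 0] by simp
  have n4: "A*M - Q^2 \<noteq> 0" using gA'[of 0 "m+2"] Q unfolding M by (auto simp: power_add power2_eq_square mult_ac field_simps)
  have n5: "1 - Q*V \<noteq> 0" using gQn[of "j+1"] unfolding V_def by auto
  have n6: "1 - Q*S*U \<noteq> 0" using gQn[of "1+s+k"] unfolding U_def S_def by (auto simp: power_add mult_ac)
  have U2: "U^2 = (Q^2)^k" unfolding U_def by (simp add: power_mult[symmetric] mult.commute)
  have n7: "1 - A*M/Q*U^2 \<noteq> 0" using z2[of k] unfolding U2 by simp
  have rel1: "qp M Q k * ((1 - M/Q^2)*(1-M/Q)) = qp (M/Q^2) Q k * ((1 - M/Q^2*U)*(1 - M/Q^2*(Q*U)))"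
  proof -
    have "qp (M/Q^2) Q (Suc (Suc k)) = qp (M/Q^2) Q k * ((1 - M/Q^2*U)*(1 - M/Q^2*(Q*U)))"
      unfolding U_def by (simp add: qp_Suc mult_ac)
    moreover have "qp (M/Q^2) Q (Suc (Suc k)) = (1 - M/Q^2) * ((1 - M/Q^2*Q) * qp (M/Q^2*Q*Q) Q k)"
      by (simp add: qp_Suc')
    moreover have "M/Q^2*Q*Q = M" "M/Q^2*Q = M/Q" using Q by (simp_all add: power2_eq_square)
    ultimately show ?thesis by (simp add: mult_ac)
  qed
  have rel2: "qp (A*M*Q) (Q^2) k * (1 - A*M/Q) = qp (A*M/Q) (Q^2) k * (1 - A*M/Q*U^2)"
  proof -
    have "qp (A*M/Q) (Q^2) (Suc k) = qp (A*M/Q) (Q^2) k * (1 - A*M/Q*U^2)"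
      unfolding U2 by (simp add: qp_Suc)
    moreover have "qp (A*M/Q) (Q^2) (Suc k) = (1 - A*M/Q) * qp (A*M/Q*Q^2) (Q^2) k"
      by (simp add: qp_Suc')
    moreover have "A*M/Q*Q^2 = A*M*Q" using Q by (simp add: power2_eq_square)
    ultimately show ?thesis by (simp add: mult_ac)
  qed
  define a1 where "a1 = qp A Q k"
  define al where "al = qp (M/Q^2) Q k"
  define c where "c = qp Q (Q^2) k"
  define dd1 where "dd1 = qp Q Q j"
  define dd2 where "dd2 = qp Q Q (2*s+j)"
  define zz where "zz = qp (A*M/Q) (Q^2) k"
  define alm where "alm = qp M Q k"
  define zzm where "zzm = qp (A*M*Q) (Q^2) k"
  have hM2: "hh A Q s (M/Q^2) j = a1*al*c*U/(dd1*dd2*zz)"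
    unfolding hh_def a1_def al_def c_def dd1_def dd2_def zz_def U_def k_def eMQ ..
  have hM: "hh A Q s M j = a1*alm*c*U/(dd1*dd2*zzm)"
    unfolding hh_def a1_def alm_def c_def dd1_def dd2_def zzm_def U_def k_def ..
  have hM2': "hh A Q s (M/Q^2) (Suc j) = a1*(1-A*U)*(al*(1-M/Q^2*U))*(c*(1-Q*U^2))*(Q*U)
      /(dd1*(1-Q*V)*(dd2*(1-Q*S*U))*(zz*(1-A*M/Q*U^2)))"
  proof -
    have e1: "Q^(2*s+j) = S*U" unfolding k_def S_def U_def by (simp add: power_add[symmetric] mult_2 add.assoc)
    have e0: "hh A Q s (M/Q^2) (Suc j) = qp A Q (Suc k) * qp (M/Q^2) Q (Suc k) * qp Q (Q^2) (Suc k) * Q^(Suc k)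
       / (qp Q Q (Suc j) * qp Q Q (Suc (2*s+j)) * qp (A*M/Q) (Q^2) (Suc k))"
      unfolding hh_def k_def eMQ by simp
    show ?thesis unfolding e0 qp_Suc U2[symmetric] e1 power_Suc U_def[symmetric] V_def[symmetric]
      a1_def[symmetric] al_def[symmetric] c_def[symmetric] dd1_def[symmetric] dd2_def[symmetric] zz_def[symmetric]
      by (simp add: mult_ac)
  qed
  define hv where "hv = hh A Q s (M/Q^2) j"
  have alm_eq: "alm = al*(1-M*U/Q^2)*(1-M*U/Q)/((1-M/Q^2)*(1-M/Q))"
  proof -
    have "alm * ((1 - M/Q^2)*(1-M/Q)) = al*(1-M*U/Q^2)*(1-M*U/Q)"
      using rel1 Q unfolding alm_def al_def by (simp add: power2_eq_square field_simps)
    moreover have "(1 - M/Q^2)*(1-M/Q) \<noteq> 0" using n1 n2 by simp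
    ultimately show ?thesis by (simp add: nonzero_eq_divide_eq)
  qed
  have zzm_eq: "zzm = zz*(1 - A*M/Q*U^2)/(1-A*M/Q)"
    using rel2 n3 unfolding zzm_def zz_def by (simp add: field_simps)
  have zznz: "zz \<noteq> 0" using z unfolding zz_def eMQ .
  have HM: "hh A Q s M j = hv*(kap*(1-M*U/Q^2)*(1-M*U/Q)/(1-A*M/Q*U^2))"
    unfolding hM hv_def hM2 alm_eq zzm_eq kap_def
    using n1 n2 n3 n7 zznz d1 d2 Unz Q unfolding dd1_def[symmetric] dd2_def[symmetric]
    by (simp add: field_simps)
  have H0: "H j = c1*hv*((1-U/S)*(1-S*U))/U"
  proof -
    have "Q^(2*s+j) = S*U" unfolding k_def S_def U_def by (simp add: power_add[symmetric] mult_2 add.assoc)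
    moreover have "V = U/S" using UV Unz by simp
    ultimately show ?thesis unfolding H_def hv_def V_def[symmetric] k_def[symmetric] U_def[symmetric]
      by simp
  qed
  have HS: "H (Suc j) = c1*hv*((1-A*U)*(1-M*U/Q^2)*(1-Q*U^2)/(1-A*M/Q*U^2))/U"
  proof -
    have e1: "Q^(2*s+j) = S*U" unfolding k_def S_def U_def by (simp add: power_add[symmetric] mult_2 add.assoc)
    have e2: "Q^(s+j) = U" "Q^j = V" unfolding U_def V_def k_def by simp_all
    have "H (Suc j) = c1 * hh A Q s (M/Q^2) (Suc j) * (1-Q*V)*(1-Q*S*U)/(Q*U)"
      unfolding H_def add_Suc_right power_Suc e1 e2 by (simp add: mult_ac)
    also have "\<dots> = c1*hv*((1-A*U)*(1-M*U/Q^2)*(1-Q*U^2)/(1-A*M/Q*U^2))/U"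
    proof -
      have g: "\<And>(a::'a) p b qq cc r W d X1 e X2 f D. X1 \<noteq> 0 \<Longrightarrow> X2 \<noteq> 0 \<Longrightarrow> W \<noteq> 0 \<Longrightarrow>
        (a*p*(b*qq)*(cc*r)*W/(d*X1*(e*X2)*(f*D))) * X1 * X2 / W = (a*b*cc/(d*e*f)) * (p*qq*r/D)"
        by (simp add: field_simps)
      have W: "Q*U \<noteq> 0" using Unz Q by simp
      have e: "hh A Q s (M / Q\<^sup>2) (Suc j) * (1-Q*V) * (1-Q*S*U) / (Q*U)
        = (a1*al*c/(dd1*dd2*zz)) * ((1-A*U)*(1-M/Q^2*U)*(1-Q*U^2)/(1-A*M/Q*U^2))"
        unfolding hM2' by (rule g[OF n5 n6 W])
      have e2: "hv = (a1*al*c/(dd1*dd2*zz)) * U" unfolding hv_def hM2 by simp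
      have "M/Q^2*U = M*U/Q^2" by simp
      then show ?thesis using e Unz(1) unfolding e2
        by (simp add: mult.assoc) (metis times_divide_eq_right)
    qed
    finally show ?thesis .
  qed
  have sc: "rho - kap*(1-M*U/Q^2)*(1-M*U/Q)/(1 - A*M/Q*U^2)
    = c1*((1-A*U)*(1-M*U/Q^2)*(1-Q*U^2)/(1 - A*M/Q*U^2) - (1-U/S)*(1-S*U))/U"
    by (rule scal_id[OF Q Unz(2) n4 Unz(1) n7 meta_eq_to_obj_eq[OF rho_def] meta_eq_to_obj_eq[OF c1_def]])
  have "rho * hv - hh A Q s M j = hv * (rho - kap*(1-M*U/Q^2)*(1-M*U/Q)/(1 - A*M/Q*U^2))"
    unfolding HM by (simp add: algebra_simps)
  also have "\<dots> = H (Suc j) - H j"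
  proof -
    have g2: "\<And>a b::'a. hv*(c1*(a-b)/U) = c1*hv*a/U - c1*hv*b/U"
      by (simp add: right_diff_distrib diff_divide_distrib mult_ac)
    show ?thesis unfolding sc HS H0 g2 ..
  qed
  finally show ?thesis unfolding hv_def .
qed


lemma rec_step:
  fixes A Q :: "'a::field" and s m J :: nat
  assumes Q: "Q \<noteq> 0" and gQ: "\<forall>a b::nat. Q^a = Q^b \<longrightarrow> a = b"
    and gA: "\<forall>a b::nat. A * Q^a \<noteq> Q^b" and ms: "s \<le> m" and mJ: "m + 3 \<le> s + J"
    and eq0: "(\<Sum>j<J. hh A Q s (1/Q^m) j) = 0"
  shows "(\<Sum>j<J. hh A Q s (1/Q^(m+2)) j) = 0"
proof -
  define M where "M = 1/Q^m"
  define S where "S = Q^s"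
  define kap where "kap = (1 - A*M/Q)/((1-M/Q^2)*(1-M/Q))"
  define c1 where "c1 = kap*M/(A*M-Q^2)"
  define rho where "rho = -kap*(Q^2-M*S)*(Q^2*S-M)/(Q^2*S*(A*M-Q^2))"
  define H where "H = (\<lambda>j. c1 * hh A Q s (M/Q^2) j * (1 - Q^j) * (1 - Q^(2*s+j)) / Q^(s+j))"
  have MQ: "M/Q^2 = 1/Q^(m+2)" unfolding M_def by (simp add: power_add power2_eq_square)
  have t: "\<And>j. rho * hh A Q s (M/Q^2) j - hh A Q s M j = H (Suc j) - H j"
    unfolding rho_def kap_def c1_def H_def S_def by (rule tele[OF Q gQ gA M_def])
  have "(\<Sum>j<J. rho * hh A Q s (M/Q^2) j - hh A Q s M j) = H J - H 0"
    unfolding t by (rule sum_lessThan_telescope)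
  moreover have "H 0 = 0" unfolding H_def by simp
  moreover have "H J = 0"
  proof -
    have "qp (M/Q^2) Q (s+J) = 0"
      by (rule qp_zero[of "m+2"]) (use mJ Q in \<open>auto simp: MQ\<close>)
    thus ?thesis unfolding H_def hh_def by simp
  qed
  ultimately have "rho * (\<Sum>j<J. hh A Q s (M/Q^2) j) = 0"
    using eq0 unfolding M_def by (simp add: sum_subtractf sum_distrib_left)
  moreover have "rho \<noteq> 0"
  proof -
    have gQn: "\<And>n::nat. n > 0 \<Longrightarrow> Q^n \<noteq> 1" using gQ by (metis power_0 less_irrefl)
    have n1: "1 - M/Q^2 \<noteq> 0" using gQn[of "m+2"] Q unfolding M_def by (auto simp: power_add power2_eq_square mult_ac)
    have n2: "1 - M/Q \<noteq> 0" using gQn[of "m+1"] Q unfolding M_def by (auto simp: power_add mult_ac)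
    have n3: "1 - A*M/Q \<noteq> 0" using gA[rule_format, of 0 "m+1"] Q unfolding M_def by (auto simp: field_simps)
    have n4: "A*M - Q^2 \<noteq> 0" using gA[rule_format, of 0 "m+2"] Q unfolding M_def
      by (auto simp: power_add power2_eq_square mult_ac field_simps)
    have n5: "Q^2 - M*S \<noteq> 0"
    proof
      assume "Q^2 - M*S = 0"
      hence "Q^(m+2) = Q^s" using Q unfolding M_def S_def by (simp add: field_simps power_add power2_eq_square)
      hence "m+2 = s" using gQ by blast
      thus False using ms by auto
    qed
    have n6: "Q^2*S - M \<noteq> 0"
    proof
      assume "Q^2*S - M = 0"
      hence "Q^(m+2+s) = 1" using Q unfolding M_def S_def by (auto simp: field_simps power_add power2_eq_square)
      thus False using gQn[of "m+2+s"] by simp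
    qed
    have "kap \<noteq> 0" unfolding kap_def using n1 n2 n3 by simp
    thus ?thesis unfolding rho_def using n4 n5 n6 Q unfolding S_def by simp
  qed
  ultimately show ?thesis unfolding MQ by simp
qed


lemma base_case:
  fixes A Q :: "'a::field" and s J :: nat
  assumes Q: "Q \<noteq> 0" and gQ: "\<forall>a b::nat. Q^a = Q^b \<longrightarrow> a = b"
    and gA: "\<forall>a b::nat. A * Q^a \<noteq> Q^b" and J: "2 \<le> J"
  shows "(\<Sum>j<J. hh A Q s (1/Q^(s+1)) j) = 0"
proof -
  define M where "M = 1/Q^(s+1)"
  have gQn: "\<And>n::nat. n > 0 \<Longrightarrow> Q^n \<noteq> 1" using gQ by (metis power_0 less_irrefl)
  have "(\<Sum>j<J. hh A Q s M j) = (\<Sum>j<2. hh A Q s M j)"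
  proof (rule sum.mono_neutral_right)
    show "\<forall>i\<in>{..<J} - {..<2}. hh A Q s M i = 0"
    proof
      fix i assume "i \<in> {..<J} - {..<2}"
      hence "2 \<le> i" by auto
      have "qp M Q (s+i) = 0" by (rule qp_zero[of "s+1"]) (use \<open>2 \<le> i\<close> Q in \<open>auto simp: M_def\<close>)
      thus "hh A Q s M i = 0" unfolding hh_def by simp
    qed
  qed (use J in auto)
  also have "\<dots> = hh A Q s M 0 + hh A Q s M 1" by (simp add: numeral_2_eq_2)
  also have "\<dots> = 0"
  proof -
    define a where "a = qp A Q s"
    define m0 where "m0 = qp M Q s"
    define c where "c = qp Q (Q^2) s"
    define d2 where "d2 = qp Q Q (2*s)"
    define z where "z = qp (A*M*Q) (Q^2) s"
    have h0: "hh A Q s M 0 = a*m0*c*Q^s/(d2*z)" unfolding hh_def a_def m0_def c_def d2_def z_def by simp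
    have e1: "M*Q^s = 1/Q" unfolding M_def using Q by simp
    have e2: "A*M*Q*(Q^2)^s = A*Q^s" unfolding M_def using Q
      by (simp add: power_mult[symmetric] mult_2 power_add field_simps mult_2_right)
    have e3: "Q*(Q^2)^s = Q*Q^(2*s)" by (simp add: power_mult)
    have h1: "hh A Q s M 1 = a*(1-A*Q^s)*(m0*(1-1/Q))*(c*(1-Q*Q^(2*s)))*(Q^s*Q)
       /((1-Q)*(d2*(1-Q*Q^(2*s)))*(z*(1-A*Q^s)))"
      unfolding hh_def a_def m0_def c_def d2_def z_def
      by (simp add: qp_Suc e1[symmetric] e2[symmetric] e3 mult_ac)
    have n1: "1 - A*Q^s \<noteq> 0" using gA[rule_format, of s 0] by auto
    have n2: "1 - Q*Q^(2*s) \<noteq> 0" using gQn[of "Suc (2*s)"] by auto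
    have n3: "1 - Q \<noteq> 0" using gQn[of 1] by auto
    have d2nz: "d2 \<noteq> 0" unfolding d2_def by (rule qp_nz) (metis gQn power_Suc zero_less_Suc)
    have znz: "z \<noteq> 0" unfolding z_def
    proof (rule qp_nz)
      fix i
      have "A*M*Q*(Q^2)^i = A*Q^(2*i+1)/Q^(s+1)" unfolding M_def by (simp add: power_mult[symmetric])
      thus "A*M*Q*(Q^2)^i \<noteq> 1" using gA[rule_format, of "2*i+1" "s+1"] Q by simp
    qed
    have g: "\<And>(x::'a) y X Y. X \<noteq> 0 \<Longrightarrow> Y \<noteq> 0 \<Longrightarrow>
       a*X*(m0*(1-1/Q))*(c*Y)*(Q^s*Q)/((1-Q)*(d2*Y)*(z*X)) = - (a*m0*c*Q^s/(d2*z))"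
      using Q n3 d2nz znz by (simp add: field_simps)
    show ?thesis unfolding h0 h1 g[OF n1 n2] by simp
  qed
  finally show ?thesis unfolding M_def .
qed

lemma vanish:
  fixes A Q :: "'a::field" and s J i :: nat
  assumes Q: "Q \<noteq> 0" and gQ: "\<forall>a b::nat. Q^a = Q^b \<longrightarrow> a = b"
    and gA: "\<forall>a b::nat. A * Q^a \<noteq> Q^b" and J: "s + 2 + 2*i \<le> s + J"
  shows "(\<Sum>j<J. hh A Q s (1/Q^(s+1+2*i)) j) = 0"
  using J
proof (induction i)
  case 0 then show ?case using base_case[OF Q gQ gA] by simp
next
  case (Suc i)
  have "(\<Sum>j<J. hh A Q s (1/Q^((s+1+2*i)+2)) j) = 0"
    by (rule rec_step[OF Q gQ gA]) (use Suc in auto)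
  thus ?case by (simp add: algebra_simps)
qed


lemma core_sum:
  fixes A B Q :: "'a::field" and s n m :: nat
  assumes Q: "Q \<noteq> 0" and gQ: "\<forall>a b::nat. Q^a = Q^b \<longrightarrow> a = b"
    and gA: "\<forall>a b::nat. A * Q^a \<noteq> Q^b" and B: "B = 1/Q^m"
    and mn: "m \<le> n - 1" and n: "0 < n" and sn: "s \<le> n - 1" and par: "s \<le> m \<Longrightarrow> odd (m - s)"
  shows "(\<Sum>k=s..n-1. qp A Q k * qp B Q k * qp Q (Q^2) k * Q^k /
     (qp Q Q (k - s) * qp Q Q (k + s) * qp (A*B*Q) (Q^2) k)) = 0"
proof (cases "s \<le> m")
  case False
  show ?thesis
  proof (rule sum.neutral, rule ballI)
    fix k assume "k \<in> {s..n-1}"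
    hence "m < k" using False by auto
    hence "qp B Q k = 0" by (intro qp_zero[of m]) (use Q B in auto)
    thus "qp A Q k * qp B Q k * qp Q (Q^2) k * Q^k /
     (qp Q Q (k - s) * qp Q Q (k + s) * qp (A*B*Q) (Q^2) k) = 0" by simp
  qed
next
  case True
  with par have "odd (m - s)" by blast
  then obtain i where i: "m - s = 2*i + 1" by (metis oddE)
  hence m: "m = s + 1 + 2*i" using True by simp
  have img: "{s..n-1} = (\<lambda>j. s + j) ` {..<n-s}"
  proof (rule set_eqI, rule iffI)
    fix k assume "k \<in> {s..n-1}"
    hence "k = s + (k - s) \<and> k - s < n - s" using n by auto
    thus "k \<in> (\<lambda>j. s + j) ` {..<n-s}" by blast
  qed (use n in auto)
  have "(\<Sum>k=s..n-1. qp A Q k * qp B Q k * qp Q (Q^2) k * Q^k /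
     (qp Q Q (k - s) * qp Q Q (k + s) * qp (A*B*Q) (Q^2) k))
     = (\<Sum>j<n-s. hh A Q s B j)"
    unfolding img by (subst sum.reindex) (auto simp: inj_on_def hh_def mult_2 add_ac)
  also have "\<dots> = 0" unfolding B m
    by (rule vanish[OF Q gQ gA]) (use m mn n in auto)
  finally show ?thesis .
qed


definition Sgen :: "nat \<Rightarrow> nat \<Rightarrow> nat \<Rightarrow> nat \<Rightarrow> 'a::field \<Rightarrow> 'a \<Rightarrow> 'a \<Rightarrow> 'a" where
  "Sgen d n r s a b q = (\<Sum>k=s..n-1.
       qp (a * q powi int r) (q ^ d) k
       * qp (b * q powi (int d - int r)) (q ^ d) k
       * qp (q ^ d) (q ^ (2*d)) k * q ^ (d*k)
       / (qp (q ^ d) (q ^ d) (k - s) * qp (q ^ d) (q ^ d) (k + s)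
          * qp (a * b * q ^ (2*d)) (q ^ (2*d)) k))"

lemma gen_shift:
  fixes b q :: "'a::field"
  assumes q: "q \<noteq> 0" and g: "\<forall>e::int. b * q powi e \<noteq> 1"
  shows "b * q powi e1 * q^x \<noteq> q^y"
proof
  assume "b * q powi e1 * q^x = q^y"
  moreover have "q powi (e1 + int x - int y) = q powi e1 * q^x / q^y"
    using q by (simp add: power_int_diff power_int_add)
  ultimately have "q^y * (b * q powi (e1 + int x - int y)) = q^y * 1" using q
    by (simp add: field_simps)
  hence "b * q powi (e1 + int x - int y) = 1" using q by simp
  thus False using g by blast
qed

lemma gQ_from:
  fixes q :: "'a::field"
  assumes gq: "\<forall>a b::nat. q^a = q^b \<longrightarrow> a = b" and d: "d > 0"
  shows "\<forall>a b::nat. (q^d)^a = (q^d)^b \<longrightarrow> a = b"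
proof (intro allI impI)
  fix x y :: nat assume "(q^d)^x = (q^d)^y"
  hence "q^(d*x) = q^(d*y)" by (simp add: power_mult)
  hence "d*x = d*y" using gq by blast
  thus "x = y" using d by simp
qed

lemma Sgen_zero_a:
  fixes a b q :: "'a::field"
  assumes q: "q \<noteq> 0" and gq: "\<forall>a b::nat. q^a = q^b \<longrightarrow> a = b"
    and gb: "\<forall>e::int. b * q powi e \<noteq> 1" and d: "d > 0" and n: "n > 0" and sn: "s \<le> n - 1"
    and a: "a = q powi (-(int r + int d * int L))" and L: "L \<le> n - 1"
    and par: "s \<le> L \<Longrightarrow> odd (L - s)"
  shows "Sgen d n r s a b q = 0"
proof -
  define Q where "Q = q^d"
  define A where "A = b * q powi (int d - int r)"
  define B where "B = a * q powi int r"
  have Q0: "Q \<noteq> 0" using q unfolding Q_def by simp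
  have e1: "q powi (-(int r + int d * int L)) * q powi (int r) = q powi (-(int (d*L)))"
    by (subst power_int_add[symmetric]) (simp_all add: q)
  have B: "B = 1/Q^L" unfolding B_def a Q_def e1 using q
    by (simp only: power_int_minus power_int_of_nat power_mult divide_inverse mult_1)
  have e2: "q powi (int d - int r) * q powi (int r) = q^d"
    by (subst power_int_add[symmetric]) (simp_all add: q)
  have ab: "a * b * q^(2*d) = A*B*Q" unfolding A_def B_def Q_def using e2
    by (simp add: mult_ac mult_2 power_add mult_2_right)
  have gA: "\<forall>x y::nat. A * Q^x \<noteq> Q^y" unfolding A_def Q_def
    unfolding power_mult[symmetric] using gen_shift[OF q gb] by blast
  have "Sgen d n r s a b q = (\<Sum>k=s..n-1. qp A Q k * qp B Q k * qp Q (Q^2) k * Q^k /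
     (qp Q Q (k - s) * qp Q Q (k + s) * qp (A*B*Q) (Q^2) k))"
  proof -
    have e3: "q^(2*d) = Q^2" "\<And>k. q^(d*k) = Q^k" unfolding Q_def by (simp_all add: power_mult[symmetric] mult.commute)
    show ?thesis unfolding Sgen_def e3 ab[unfolded e3] A_def[symmetric] B_def[symmetric] Q_def[symmetric]
      by (intro sum.cong refl) (simp add: mult_ac)
  qed
  also have "\<dots> = 0"
    by (rule core_sum[OF Q0 gQ_from[OF gq d, folded Q_def] gA B L n sn par])
  finally show ?thesis .
qed

lemma Sgen_zero_b:
  fixes a b q :: "'a::field"
  assumes q: "q \<noteq> 0" and gq: "\<forall>a b::nat. q^a = q^b \<longrightarrow> a = b"
    and ga: "\<forall>e::int. a * q powi e \<noteq> 1" and d: "d > 0" and n: "n > 0" and sn: "s \<le> n - 1"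
    and b: "b = q powi (-(int d - int r + int d * int L))" and L: "L \<le> n - 1"
    and par: "s \<le> L \<Longrightarrow> odd (L - s)"
  shows "Sgen d n r s a b q = 0"
proof -
  define Q where "Q = q^d"
  define A where "A = a * q powi int r"
  define B where "B = b * q powi (int d - int r)"
  have Q0: "Q \<noteq> 0" using q unfolding Q_def by simp
  have e1: "q powi (-(int d - int r + int d * int L)) * q powi (int d - int r) = q powi (-(int (d*L)))"
    by (subst power_int_add[symmetric]) (simp_all add: q)
  have B: "B = 1/Q^L" unfolding B_def b Q_def e1 using q
    by (simp only: power_int_minus power_int_of_nat power_mult divide_inverse mult_1)
  have e2: "q powi (int r) * q powi (int d - int r) = q^d"
    by (subst power_int_add[symmetric]) (simp_all add: q)
  have ab: "a * b * q^(2*d) = A*B*Q" unfolding A_def B_def Q_def using e2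
    by (simp add: mult_ac mult_2 power_add mult_2_right)
  have gA: "\<forall>x y::nat. A * Q^x \<noteq> Q^y" unfolding A_def Q_def
    unfolding power_mult[symmetric] using gen_shift[OF q ga] by blast
  have "Sgen d n r s a b q = (\<Sum>k=s..n-1. qp A Q k * qp B Q k * qp Q (Q^2) k * Q^k /
     (qp Q Q (k - s) * qp Q Q (k + s) * qp (A*B*Q) (Q^2) k))"
  proof -
    have e3: "q^(2*d) = Q^2" "\<And>k. q^(d*k) = Q^k" unfolding Q_def by (simp_all add: power_mult[symmetric] mult.commute)
    show ?thesis unfolding Sgen_def e3 ab[unfolded e3] A_def[symmetric] B_def[symmetric] Q_def[symmetric] ..
  qed
  also have "\<dots> = 0"
    by (rule core_sum[OF Q0 gQ_from[OF gq d, folded Q_def] gA B L n sn par])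
  finally show ?thesis .
qed


locale evalhom =
  fixes \<phi> :: "'r::idom \<Rightarrow> 'k::field"
  assumes hadd: "\<phi> (x + y) = \<phi> x + \<phi> y" and hmult: "\<phi> (x * y) = \<phi> x * \<phi> y" and h1: "\<phi> 1 = 1"
begin

lemma h0: "\<phi> 0 = 0"
proof -
  have "\<phi> 0 + \<phi> 0 = \<phi> 0 + 0" using hadd[of 0 0] by simp
  thus ?thesis by (simp only: add_left_cancel)
qed
lemma hminus: "\<phi> (- x) = - \<phi> x" using hadd[of x "-x"] h0 by (simp add: eq_neg_iff_add_eq_0 add.commute)
lemma hdiff: "\<phi> (x - y) = \<phi> x - \<phi> y" using hadd[of x "-y"] hminus by simp
lemma hpow: "\<phi> (x ^ n) = \<phi> x ^ n" by (induction n) (simp_all add: h1 hmult)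

definition good :: "'r fract \<Rightarrow> 'k \<Rightarrow> bool" where
  "good z w \<longleftrightarrow> (\<exists>x y. \<phi> y \<noteq> 0 \<and> z = Fract x y \<and> w = \<phi> x / \<phi> y)"

lemma nz: "\<phi> y \<noteq> 0 \<Longrightarrow> y \<noteq> 0" using h0 by auto

lemma good_to_fract: "good (to_fract x) (\<phi> x)"
  unfolding good_def to_fract_def by (rule exI[of _ x], rule exI[of _ 1]) (simp add: h1)

lemma good_unique: assumes "good z w" "good z w'" shows "w = w'"
proof -
  obtain x y where a: "\<phi> y \<noteq> 0" "z = Fract x y" "w = \<phi> x / \<phi> y" using assms(1) unfolding good_def by blast
  obtain x' y' where b: "\<phi> y' \<noteq> 0" "z = Fract x' y'" "w' = \<phi> x' / \<phi> y'" using assms(2) unfolding good_def by blast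
  have "x * y' = x' * y" using a b nz eq_fract(1)[of y y' x x'] by simp
  hence "\<phi> x * \<phi> y' = \<phi> x' * \<phi> y" using hmult by metis
  thus ?thesis unfolding a(3) b(3) using a(1) b(1) by (simp add: frac_eq_eq)
qed

lemma good_add: assumes "good z w" "good z' w'" shows "good (z + z') (w + w')"
proof -
  obtain x y where a: "\<phi> y \<noteq> 0" "z = Fract x y" "w = \<phi> x / \<phi> y" using assms(1) unfolding good_def by blast
  obtain x' y' where b: "\<phi> y' \<noteq> 0" "z' = Fract x' y'" "w' = \<phi> x' / \<phi> y'" using assms(2) unfolding good_def by blast
  show ?thesis unfolding good_def
    by (rule exI[of _ "x * y' + x' * y"], rule exI[of _ "y * y'"])
      (use a b nz in \<open>simp add: hadd hmult add_frac_eq\<close>)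
qed

lemma good_mult: assumes "good z w" "good z' w'" shows "good (z * z') (w * w')"
proof -
  obtain x y where a: "\<phi> y \<noteq> 0" "z = Fract x y" "w = \<phi> x / \<phi> y" using assms(1) unfolding good_def by blast
  obtain x' y' where b: "\<phi> y' \<noteq> 0" "z' = Fract x' y'" "w' = \<phi> x' / \<phi> y'" using assms(2) unfolding good_def by blast
  show ?thesis unfolding good_def
    by (rule exI[of _ "x * x'"], rule exI[of _ "y * y'"])
      (use a b nz in \<open>simp add: hmult\<close>)
qed

lemma good_uminus: assumes "good z w" shows "good (- z) (- w)"
proof -
  obtain x y where a: "\<phi> y \<noteq> 0" "z = Fract x y" "w = \<phi> x / \<phi> y" using assms(1) unfolding good_def by blast
  show ?thesis unfolding good_def
    by (rule exI[of _ "- x"], rule exI[of _ "y"]) (use a in \<open>simp add: hminus\<close>)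
qed

lemma good_diff: "good z w \<Longrightarrow> good z' w' \<Longrightarrow> good (z - z') (w - w')"
  using good_add[OF _ good_uminus] by (metis diff_conv_add_uminus)

lemma good_inverse: assumes "good z w" "w \<noteq> 0" shows "good (inverse z) (inverse w)"
proof -
  obtain x y where a: "\<phi> y \<noteq> 0" "z = Fract x y" "w = \<phi> x / \<phi> y" using assms(1) unfolding good_def by blast
  have "\<phi> x \<noteq> 0" using a assms(2) by auto
  show ?thesis unfolding good_def
    by (rule exI[of _ y], rule exI[of _ x]) (use a \<open>\<phi> x \<noteq> 0\<close> in simp)
qed

lemma good_divide: "good z w \<Longrightarrow> good z' w' \<Longrightarrow> w' \<noteq> 0 \<Longrightarrow> good (z / z') (w / w')"
  using good_mult[OF _ good_inverse] by (metis divide_inverse)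

lemma good_one: "good 1 1" using good_to_fract[of 1] h1 by (simp add: to_fract_def One_fract_def)

lemma good_power: "good z w \<Longrightarrow> good (z ^ n) (w ^ n)"
  by (induction n) (simp_all add: good_one good_mult)

lemma good_powi: "good z w \<Longrightarrow> w \<noteq> 0 \<Longrightarrow> good (z powi e) (w powi e)"
  unfolding power_int_def by (auto intro!: good_power good_inverse simp: power_inverse[symmetric])

lemma good_qp: "good x x' \<Longrightarrow> good y y' \<Longrightarrow> good (qp x y m) (qp x' y' m)"
  by (induction m) (simp_all add: qp_Suc good_one good_mult good_diff good_power)

lemma good_sum: "finite A \<Longrightarrow> (\<And>i. i \<in> A \<Longrightarrow> good (f i) (g i)) \<Longrightarrow> good (sum f A) (sum g A)"
proof (induction A rule: finite_induct)
  case empty show ?case using good_to_fract[of 0] h0 by (simp add: to_fract_def Zero_fract_def)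
next
  case (insert a A) then show ?case by (simp add: good_add)
qed

lemma good_Sgen:
  assumes "good a a'" "good b b'" "good q q'" "q' \<noteq> 0"
    and "\<And>j. qp (q'^d) (q'^d) j \<noteq> 0" and "\<And>k. qp (a'*b'*q'^(2*d)) (q'^(2*d)) k \<noteq> 0"
  shows "good (Sgen d n r s a b q) (Sgen d n r s a' b' q')"
  unfolding Sgen_def
  by (intro good_sum finite_atLeastAtMost good_divide good_mult good_qp good_powi good_power assms)
     (simp add: assms(5,6))

lemma good_zeroD: "good z 0 \<Longrightarrow> \<exists>x y. \<phi> y \<noteq> 0 \<and> z = Fract x y \<and> \<phi> x = 0"
  unfolding good_def by auto

end

lemma extract_lem:
  fixes f1 :: "'r::factorial_ring_gcd \<Rightarrow> 'k1::field" and f2 :: "'r \<Rightarrow> 'k2::field"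
  assumes e1: "evalhom f1" and e2: "evalhom f2"
    and k1: "\<And>z. f1 z = 0 \<longleftrightarrow> N1 dvd z" and k2: "\<And>z. f2 z = 0 \<longleftrightarrow> N2 dvd z"
    and N1: "N1 \<noteq> 0" and N2: "N2 \<noteq> 0" and N12: "\<not> N1 dvd N2"
    and g1: "evalhom.good f1 S 0" and g2: "evalhom.good f2 S 0"
  shows "\<exists>X Y. Y \<noteq> 0 \<and> S = Fract X Y \<and> N1 * N2 dvd X \<and> coprime Y (N1 * N2)"
proof -
  have pr: "prime_elem N" if e: "evalhom f" and k: "\<And>z. f z = 0 \<longleftrightarrow> N dvd z" and N: "N \<noteq> 0"
    for f :: "'r \<Rightarrow> 'k::field" and N
  proof -
    interpret evalhom f by (rule e)
    have "\<not> N dvd 1" using k[of 1] h1 by simp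
    moreover have "N dvd a \<or> N dvd b" if "N dvd a * b" for a b
    proof -
      have "f a * f b = 0" using that k[of "a*b"] hmult by simp
      thus ?thesis using k by simp
    qed
    ultimately show ?thesis unfolding prime_elem_def using N by blast
  qed
  have p1: "prime_elem N1" by (rule pr[OF e1 k1 N1])
  have p2: "prime_elem N2" by (rule pr[OF e2 k2 N2])
  obtain x y where a: "f1 y \<noteq> 0" "S = Fract x y" "f1 x = 0"
    using evalhom.good_zeroD[OF e1 g1] by blast
  obtain x' y' where b: "f2 y' \<noteq> 0" "S = Fract x' y'" "f2 x' = 0"
    using evalhom.good_zeroD[OF e2 g2] by blast
  have y0: "y \<noteq> 0" using a evalhom.nz[OF e1] by blast
  have y'0: "y' \<noteq> 0" using b evalhom.nz[OF e2] by blast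
  define g where "g = gcd x y"
  define X where "X = x div g"
  define Y where "Y = y div g"
  have cXY: "coprime X Y" unfolding X_def Y_def g_def using y0 by (intro div_gcd_coprime) auto
  have xX: "x = X * g" unfolding X_def g_def by simp
  have yY: "y = Y * g" unfolding Y_def g_def by simp
  have Y0: "Y \<noteq> 0" using y0 yY by auto
  have g0: "g \<noteq> 0" using y0 yY by auto
  have SXY: "S = Fract X Y" unfolding a(2) using y0 Y0 by (simp add: eq_fract xX yY mult_ac)
  have n1y: "\<not> N1 dvd y" using a k1 by blast
  have n1g: "\<not> N1 dvd g" using n1y unfolding g_def by (meson dvd_trans gcd_dvd2)
  have "N1 dvd X * g" using a k1 xX by blast
  hence d1: "N1 dvd X" using p1 n1g prime_elem_dvd_mult_iff by blast
  have "x' * Y = X * y'" using b(2) SXY y'0 Y0 eq_fract(1) by metis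
  moreover have "N2 dvd x'" using b k2 by blast
  ultimately have "N2 dvd X * y'" by (metis dvd_mult2)
  moreover have "\<not> N2 dvd y'" using b k2 by blast
  ultimately have d2: "N2 dvd X" using p2 prime_elem_dvd_mult_iff by blast
  have "\<not> N1 dvd Y" using n1y yY by (metis dvd_mult2)
  hence c1: "coprime Y N1" using p1 prime_elem_imp_coprime coprime_commute by blast
  have "\<not> N2 dvd Y"
  proof
    assume "N2 dvd Y"
    hence "is_unit N2" using d2 cXY by (meson coprime_common_divisor)
    thus False using p2 by (simp add: prime_elem_def)
  qed
  hence c2: "coprime Y N2" using p2 prime_elem_imp_coprime coprime_commute by blast
  have c12: "coprime N1 N2" using p1 N12 prime_elem_imp_coprime by blast
  show ?thesis
    by (rule exI[of _ X], rule exI[of _ Y]) (use Y0 SXY d1 d2 c12 c1 c2 divides_mult in auto)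
qed


lemma map_poly_hadd:
  assumes "\<And>x y. f (x + y) = f x + f y" "f 0 = 0"
  shows "map_poly f (p + q) = map_poly f p + map_poly f q"
  by (intro poly_eqI) (simp add: coeff_map_poly assms)

lemma map_poly_hmult:
  fixes f :: "'a::comm_ring_1 \<Rightarrow> 'b::comm_ring_1"
  assumes a: "\<And>x y. f (x + y) = f x + f y" and z: "f 0 = 0" and m: "\<And>x y. f (x * y) = f x * f y"
  shows "map_poly f (p * q) = map_poly f p * map_poly f q"
proof (induction p)
  case 0 show ?case by simp
next
  case (pCons c p)
  have "map_poly f (pCons c p * q) = map_poly f (smult c q + pCons 0 (p * q))" by simp
  also have "\<dots> = smult (f c) (map_poly f q) + pCons 0 (map_poly f (p * q))"
    by (simp add: map_poly_hadd[OF a z] map_poly_smult[OF z m] map_poly_pCons[of f, OF z] z)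
  also have "\<dots> = map_poly f (pCons c p) * map_poly f q"
    by (simp add: pCons.IH map_poly_pCons[of f, OF z])
  finally show ?case .
qed

lemma content_unit_coeff:
  fixes p :: "'a::{semiring_gcd,normalization_semidom} poly"
  assumes "is_unit (coeff p n)" shows "content p = 1"
proof -
  have "is_unit (content p)" using content_dvd_coeff[of p n] assms by (rule dvd_unit_imp_unit)
  hence "normalize (content p) = 1" by (rule is_unit_normalize)
  thus ?thesis by simp
qed

lemma gauss_kernel:
  fixes N p :: "'a::{factorial_semiring,semiring_Gcd,ring_gcd,idom_divide,semiring_gcd_mult_normalize} poly"
  assumes c: "content N = 1" and N: "fract_poly N = smult u [:-z, 1:]" and u: "u \<noteq> 0"
    and r: "poly (fract_poly p) z = 0"
  shows "N dvd p"
proof -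
  have "[:-z, 1:] dvd fract_poly p" using r by (simp add: poly_eq_0_iff_dvd)
  hence "smult u [:-z, 1:] dvd fract_poly p" using u by (subst smult_dvd_iff) simp
  hence "fract_poly N dvd fract_poly p" unfolding N .
  thus ?thesis using c by (rule fract_poly_dvdD)
qed


lemma to_fract_pow [simp]: "to_fract (x ^ n) = to_fract x ^ n"
  by (induction n) simp_all

definition qq :: "rat poly poly" where "qq = [:[:0,1:]:]"

definition phi1 :: "nat \<Rightarrow> mpoly3 \<Rightarrow> rat poly poly fract" where
  "phi1 \<alpha> p = poly (fract_poly p) (inverse (to_fract qq ^ \<alpha>))"

lemma qq_nz: "qq \<noteq> 0" unfolding qq_def by simp

lemma evalhom_phi1: "evalhom (phi1 \<alpha>)"
  by unfold_locales (simp_all add: phi1_def fract_poly_mult)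

lemma phi1_X: "phi1 \<alpha> [:0,1:] = inverse (to_fract qq ^ \<alpha>)"
  by (simp add: phi1_def map_poly_pCons)

lemma phi1_const: "phi1 \<alpha> [:c:] = to_fract c"
  by (simp add: phi1_def map_poly_pCons)

lemma ker1: "phi1 \<alpha> z = 0 \<longleftrightarrow> [:1, -(qq^\<alpha>):] dvd z"
proof
  assume "phi1 \<alpha> z = 0"
  show "[:1, -(qq^\<alpha>):] dvd z"

  proof (rule gauss_kernel[where 'a="rat poly poly"])
    show "content [:1, -(qq^\<alpha>):] = 1" by (rule content_unit_coeff[of _ 0]) simp
    show "fract_poly [:1, -(qq^\<alpha>):] = smult (-(to_fract qq ^ \<alpha>)) [:- inverse (to_fract qq ^ \<alpha>), 1:]"
      using qq_nz by (simp add: map_poly_pCons)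
    show "- (to_fract qq ^ \<alpha>) \<noteq> 0" using qq_nz by simp
    show "poly (fract_poly z) (inverse (to_fract qq ^ \<alpha>)) = 0" using \<open>phi1 \<alpha> z = 0\<close> unfolding phi1_def .
  qed
next
  assume "[:1, -(qq^\<alpha>):] dvd z"
  then obtain w where w: "z = [:1, -(qq^\<alpha>):] * w" by blast
  have "phi1 \<alpha> [:1, -(qq^\<alpha>):] = 0" using qq_nz by (simp add: phi1_def map_poly_pCons)
  thus "phi1 \<alpha> z = 0" unfolding w evalhom.hmult[OF evalhom_phi1] by simp
qed


definition ww :: "rat poly fract" where "ww = to_fract [:0,1:]"
definition zb :: "int \<Rightarrow> rat poly fract" where "zb \<beta> = ww powi (-\<beta>)"
definition psi :: "int \<Rightarrow> rat poly poly \<Rightarrow> rat poly fract" where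
  "psi \<beta> c = poly (fract_poly c) (zb \<beta>)"
definition phi2 :: "int \<Rightarrow> mpoly3 \<Rightarrow> rat poly fract poly fract" where
  "phi2 \<beta> p = to_fract (map_poly (psi \<beta>) p)"

lemma ww_nz: "ww \<noteq> 0" unfolding ww_def by simp

lemma psi_add: "psi \<beta> (x + y) = psi \<beta> x + psi \<beta> y" by (simp add: psi_def)
lemma psi_mult: "psi \<beta> (x * y) = psi \<beta> x * psi \<beta> y" by (simp add: psi_def fract_poly_mult)
lemma psi_0: "psi \<beta> 0 = 0" by (simp add: psi_def)
lemma psi_1: "psi \<beta> 1 = 1" by (simp add: psi_def)

lemma evalhom_phi2: "evalhom (phi2 \<beta>)"
  by unfold_locales
    (simp_all add: phi2_def map_poly_hadd[OF psi_add psi_0] map_poly_hmult[OF psi_add psi_0 psi_mult] psi_1)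

lemma psi_X: "psi \<beta> [:0,1:] = zb \<beta>" by (simp add: psi_def map_poly_pCons)
lemma psi_const: "psi \<beta> [:c:] = to_fract c" by (simp add: psi_def map_poly_pCons)
lemma phi2_X: "phi2 \<beta> [:0,1:] = to_fract [:0,1:]" by (simp add: phi2_def map_poly_pCons psi_0 psi_1)
lemma phi2_const: "phi2 \<beta> [:c:] = to_fract [:psi \<beta> c:]" by (simp add: phi2_def map_poly_pCons psi_0)

definition N2p :: "int \<Rightarrow> rat poly poly" where
  "N2p \<beta> = (if 0 \<le> \<beta> then [:1, -([:0,1:]^nat \<beta>):] else [:[:0,1:]^nat (-\<beta>), -1:])"

lemma kerpsi: "psi \<beta> c = 0 \<longleftrightarrow> N2p \<beta> dvd c"
proof
  assume h: "psi \<beta> c = 0"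
  show "N2p \<beta> dvd c"
  proof (cases "0 \<le> \<beta>")
    case True
    have zb: "zb \<beta> = inverse (ww ^ nat \<beta>)" unfolding zb_def using True
      by (simp add: power_int_def power_inverse)
    have e: "N2p \<beta> = [:1, -([:0,1:]^nat \<beta>):]" using True by (simp add: N2p_def)
    show ?thesis unfolding e
    proof (rule gauss_kernel)
      show "content [:1, -([:0,1:]^nat \<beta>):] = 1" by (rule content_unit_coeff[of _ 0]) simp
      show "fract_poly [:1, -([:0,1:]^nat \<beta>):] = smult (-(ww ^ nat \<beta>)) [:- zb \<beta>, 1:]"
        unfolding zb using ww_nz by (simp add: map_poly_pCons ww_def)
      show "- (ww ^ nat \<beta>) \<noteq> 0" using ww_nz by simp
      show "poly (fract_poly c) (zb \<beta>) = 0" using h unfolding psi_def .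
    qed
  next
    case False
    have zb: "zb \<beta> = ww ^ nat (-\<beta>)" unfolding zb_def using False
      by (simp add: power_int_def)
    have e: "N2p \<beta> = [:[:0,1:]^nat (-\<beta>), -1:]" using False by (simp add: N2p_def)
    show ?thesis unfolding e
    proof (rule gauss_kernel)
      show "content [:[:0,1:]^nat (-\<beta>), -1:] = 1" by (rule content_unit_coeff[of _ 1]) simp
      show "fract_poly [:[:0,1:]^nat (-\<beta>), -1:] = smult (-1) [:- zb \<beta>, 1:]"
        unfolding zb by (simp add: map_poly_pCons ww_def)
      show "(-1::rat poly fract) \<noteq> 0" by simp
      show "poly (fract_poly c) (zb \<beta>) = 0" using h unfolding psi_def .
    qed
  qed
next
  assume "N2p \<beta> dvd c"
  then obtain v where v: "c = N2p \<beta> * v" by blast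
  have "psi \<beta> (N2p \<beta>) = 0"
    using ww_nz by (cases "0 \<le> \<beta>") (simp_all add: N2p_def psi_def zb_def map_poly_pCons ww_def power_int_def power_inverse)
  thus "psi \<beta> c = 0" unfolding v psi_mult by simp
qed

lemma ker2: "phi2 \<beta> z = 0 \<longleftrightarrow> [:N2p \<beta>:] dvd z"
proof -
  have "phi2 \<beta> z = 0 \<longleftrightarrow> map_poly (psi \<beta>) z = 0" unfolding phi2_def by simp
  also have "\<dots> \<longleftrightarrow> (\<forall>n. psi \<beta> (coeff z n) = 0)"
    by (simp add: poly_eq_iff coeff_map_poly psi_0)
  also have "\<dots> \<longleftrightarrow> (\<forall>n. N2p \<beta> dvd coeff z n)" by (simp add: kerpsi)
  also have "\<dots> \<longleftrightarrow> [:N2p \<beta>:] dvd z" by (simp add: const_poly_dvd_iff)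
  finally show ?thesis .
qed


lemma const_pow: "[:c:] ^ n = [:(c::'a::comm_semiring_1) ^ n:]"
  by (induction n) (simp_all add: mult.commute)

lemma X_pow_inj:
  assumes h: "([:0,1:] :: 'a::idom poly) ^ a = [:0,1:] ^ b" shows "a = b"
proof -
  have da: "\<And>k. degree (([:0,1:] :: 'a poly) ^ k) = k" by (subst degree_power_eq) simp_all
  have "a = degree (([:0,1:] :: 'a poly) ^ a)" by (simp only: da)
  also have "\<dots> = degree (([:0,1:] :: 'a poly) ^ b)" by (simp only: h)
  also have "\<dots> = b" by (simp only: da)
  finally show ?thesis .
qed



lemma gen_var:
  fixes c :: "'a::idom"
  assumes c: "c \<noteq> 0"
  shows "to_fract ([:0,1:] :: 'a poly) * (to_fract [:c:]) powi e \<noteq> 1"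
proof (cases "0 \<le> e")
  case True
  have e0: "to_fract [:c:] ^ nat e = to_fract [:c ^ nat e:]"
    by (simp only: to_fract_pow[symmetric] const_pow)
  have e1: "(to_fract [:c:]) powi e = to_fract [:c ^ nat e:]"
    using True e0 by (simp add: power_int_def)
  have e2: "([:0,1:] :: 'a poly) * [:c ^ nat e:] = [:0, c ^ nat e:]" by simp
  have a: "to_fract ([:0,1:] :: 'a poly) * (to_fract [:c:]) powi e = to_fract [:0, c ^ nat e:]"
    unfolding e1 to_fract_mult[symmetric] e2 ..
  have b: "[:0, c ^ nat e:] \<noteq> (1 :: 'a poly)"
  proof
    assume h: "[:0, c ^ nat e:] = (1 :: 'a poly)"
    have "coeff [:0, c ^ nat e:] 0 = coeff (1 :: 'a poly) 0" using h by simp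
    thus False by simp
  qed
  show ?thesis
  proof
    assume h: "to_fract ([:0,1:] :: 'a poly) * (to_fract [:c:]) powi e = 1"
    have "to_fract [:0, c ^ nat e:] = to_fract (1 :: 'a poly)" using a h by simp
    hence "[:0, c ^ nat e:] = (1 :: 'a poly)" by (simp only: to_fract_eq_iff)
    thus False using b by simp
  qed
next
  case False
  show ?thesis
  proof
    assume "to_fract ([:0,1:] :: 'a poly) * (to_fract [:c:]) powi e = 1"
    moreover have "to_fract [:c:] ^ nat (-e) \<noteq> 0" using c by simp
    ultimately have "to_fract ([:0,1:] :: 'a poly) = to_fract [:c:] ^ nat (-e)" using False
      by (simp add: power_int_def field_simps power_inverse)
    also have "\<dots> = to_fract [:c ^ nat (-e):]" by (simp only: to_fract_pow[symmetric] const_pow)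
    finally have "([:0,1:] :: 'a poly) = [:c ^ nat (-e):]" by (simp only: to_fract_eq_iff)
    hence "coeff ([:0,1:] :: 'a poly) 1 = coeff [:c ^ nat (-e):] 1" by simp
    thus False by simp
  qed
qed

lemma to_fract_const_powi:
  fixes x :: "'a::field"
  assumes "x \<noteq> 0"
  shows "to_fract [:x powi e:] = (to_fract [:x:]) powi e"
proof (cases "0 \<le> e")
  case True
  have "to_fract [:x:] ^ nat e = to_fract [:x ^ nat e:]" by (simp only: to_fract_pow[symmetric] const_pow)
  thus ?thesis using True by (simp add: power_int_def)
next
  case False
  define k where "k = nat (-e)"
  have "[:inverse (x ^ k):] * [:x ^ k:] = 1" using assms by simp
  hence "to_fract ([:inverse (x ^ k):] * [:x ^ k:]) = 1" by simp
  hence "to_fract [:inverse (x ^ k):] * to_fract [:x ^ k:] = 1" by (simp only: to_fract_mult)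
  moreover have "to_fract [:x ^ k:] = to_fract [:x:] ^ k" by (simp only: to_fract_pow[symmetric] const_pow)
  ultimately have "to_fract [:inverse (x ^ k):] * to_fract [:x:] ^ k = 1" by simp
  moreover have "to_fract [:x:] ^ k \<noteq> 0" using assms by simp
  ultimately have "to_fract [:inverse (x ^ k):] = inverse (to_fract [:x:] ^ k)"
    by (simp add: field_simps)
  thus ?thesis using False unfolding k_def by (simp add: power_int_def power_inverse)
qed


lemma lres_prop:
  fixes u v :: int and m :: nat
  assumes m: "m > 0" and v: "v > 0" and cop: "coprime v (int m)"
  shows "0 \<le> lres (of_int u / of_int v) m \<and> lres (of_int u / of_int v) m < int m
     \<and> [v * lres (of_int u / of_int v) m = u] (mod int m)"
proof -
  obtain p e where pe: "quotient_of (of_int u / of_int v :: rat) = (p, e)" by (cases "quotient_of (of_int u / of_int v :: rat)") auto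
  have e: "e > 0" using quotient_of_denom_pos[OF pe] .
  have cp: "coprime p e" using quotient_of_coprime[OF pe] .
  have x: "(of_int u / of_int v :: rat) = of_int p / of_int e" using quotient_of_div[OF pe] .
  have "(of_int (u * e) :: rat) = of_int (p * v)" using x v e by (simp add: field_simps)
  hence uepv: "u * e = p * v" by (simp only: of_int_eq_iff)
  have "e dvd p * v" using uepv by (metis dvd_triv_right)
  hence "e dvd v" using cp by (simp add: coprime_commute coprime_dvd_mult_right_iff)
  then obtain w where w: "v = e * w" by blast
  have ce: "coprime e (int m)" using cop unfolding w by simp
  have u: "u = p * w" using uepv e unfolding w by (simp add: mult_ac)
  define P where "P = (\<lambda>t. 0 \<le> t \<and> t < int m \<and> [e * t = p] (mod int m))"
  obtain x where x: "[e * x = 1] (mod int m)" using cong_solve_coprime_int[OF ce] by blast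
  define t0 where "t0 = (x * p) mod int m"
  have P0: "P t0"
  proof -
    have "[e * t0 = e * (x * p)] (mod int m)" unfolding t0_def by (simp add: cong_def mod_mult_right_eq)
    moreover have "[e * (x * p) = 1 * p] (mod int m)" using cong_mult[OF x cong_refl[of p]] by (simp add: mult_ac)
    ultimately have "[e * t0 = p] (mod int m)" using cong_trans by force
    thus "P t0" unfolding P_def t0_def using m by simp
  qed
  have uniq: "\<And>t. P t \<Longrightarrow> t = t0"
  proof -
    fix t assume Pt: "P t"
    have "[e * t = e * t0] (mod int m)" using Pt P0 unfolding P_def by (meson cong_sym cong_trans)
    hence "[t = t0] (mod int m)" using cong_mult_lcancel[OF ce] by blast
    thus "t = t0" using Pt P0 unfolding P_def by (meson cong_less_imp_eq_int)
  qed
  have Pl: "P (lres (of_int u / of_int v) m)"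
  proof -
    have "lres (of_int u / of_int v) m = (THE t. P t)" unfolding lres_def pe P_def by simp
    also have "\<dots> = t0" using P0 uniq by (rule the_equality)
    finally show ?thesis using P0 by simp
  qed
  define L where "L = lres (of_int u / of_int v) m"
  have "[w * (e * L) = w * p] (mod int m)" using Pl unfolding P_def L_def[symmetric]
    by (intro cong_scalar_left) simp
  moreover have "v * L = w * (e * L)" using w by (simp add: mult_ac)
  ultimately have "[v * lres (of_int u / of_int v) m = w * p] (mod int m)"
    unfolding L_def[symmetric] by metis
  thus ?thesis using Pl unfolding P_def u by (simp add: mult_ac)
qed


lemma L_facts:
  fixes d n r :: nat
  assumes d: "d > 0" and n: "n > 0" and cop: "coprime d n"
  defines "L1 \<equiv> lres (- of_nat r / of_nat d) n"
  defines "L2 \<equiv> lres ((of_nat r - of_nat d) / of_nat d) n"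
  shows "0 \<le> L1 \<and> L1 < int n \<and> 0 \<le> L2 \<and> L2 < int n \<and> L1 + L2 = int n - 1"
proof -
  have c: "coprime (int d) (int n)" using cop by simp
  have e1: "(- of_nat r / of_nat d :: rat) = of_int (- int r) / of_int (int d)" by simp
  have e2: "((of_nat r - of_nat d) / of_nat d :: rat) = of_int (int r - int d) / of_int (int d)" by simp
  have P1: "0 \<le> L1 \<and> L1 < int n \<and> [int d * L1 = - int r] (mod int n)"
    unfolding L1_def e1 by (rule lres_prop[OF n _ c]) (use d in simp)
  have P2: "0 \<le> L2 \<and> L2 < int n \<and> [int d * L2 = int r - int d] (mod int n)"
    unfolding L2_def e2 by (rule lres_prop[OF n _ c]) (use d in simp)
  have "[int d * L1 + int d * L2 + int d * 1 = - int r + (int r - int d) + int d] (mod int n)"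
    using P1 P2 by (intro cong_add) auto
  hence "[int d * (L1 + L2 + 1) = int d * 0] (mod int n)" by (simp add: algebra_simps)
  hence "[L1 + L2 + 1 = 0] (mod int n)" using cong_mult_lcancel[OF c] by blast
  hence "int n dvd L1 + L2 + 1" by (simp add: cong_0_iff)
  then obtain t where t: "L1 + L2 + 1 = int n * t" by blast
  have "0 < int n * t" "int n * t < int n * 2" using P1 P2 t by linarith+
  moreover have "t \<le> 0 \<Longrightarrow> int n * t \<le> 0" using n by (simp add: mult_nonneg_nonpos)
  moreover have "t \<ge> 2 \<Longrightarrow> int n * t \<ge> int n * 2" using n by (intro mult_left_mono) auto
  ultimately have "t = 1" by linarith
  thus ?thesis using P1 P2 t by simp
qed


lemma qpoch_qp: "qpoch = qp"
  by (intro ext) (simp add: qpoch_def qp_def)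

lemma emb_to_fract: "emb p = to_fract p" by (simp add: emb_def to_fract_def)

lemma var_a_eq: "var_a = to_fract [:0,1:]" by (simp add: var_a_def emb_to_fract)
lemma var_b_eq: "var_b = to_fract [:[:0,1:]:]" by (simp add: var_b_def emb_to_fract)
lemma var_q_eq: "var_q = to_fract [:qq:]" by (simp add: var_q_def emb_to_fract qq_def)

lemma qq_pow: "qq ^ k = [:[:0,1:] ^ k:]" unfolding qq_def by (simp add: const_pow)

lemma q1_inj: "\<forall>x y::nat. (to_fract qq :: rat poly poly fract)^x = to_fract qq ^ y \<longrightarrow> x = y"
proof (intro allI impI)
  fix x y :: nat assume "(to_fract qq :: rat poly poly fract)^x = to_fract qq ^ y"
  hence "to_fract (qq ^ x) = to_fract (qq ^ y)" by simp
  hence "qq ^ x = qq ^ y" by (simp only: to_fract_eq_iff)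
  hence "([:0,1:] :: rat poly) ^ x = [:0,1:] ^ y" unfolding qq_pow by simp
  thus "x = y" by (rule X_pow_inj)
qed

lemma q2_inj: "\<forall>x y::nat. (to_fract [:ww:] :: rat poly fract poly fract)^x = to_fract [:ww:] ^ y \<longrightarrow> x = y"
proof (intro allI impI)
  fix x y :: nat assume "(to_fract [:ww:] :: rat poly fract poly fract)^x = to_fract [:ww:] ^ y"
  hence "to_fract ([:ww:] ^ x) = to_fract ([:ww:] ^ y)" by simp
  hence "[:ww ^ x:] = [:ww ^ y:]" by (simp only: to_fract_eq_iff const_pow)
  hence "to_fract (([:0,1:] :: rat poly) ^ x) = to_fract ([:0,1:] ^ y)" unfolding ww_def by simp
  hence "([:0,1:] :: rat poly) ^ x = [:0,1:] ^ y" by (simp only: to_fract_eq_iff)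
  thus "x = y" by (rule X_pow_inj)
qed

lemma qp_pow_nz:
  fixes q :: "'a::field"
  assumes gq: "\<forall>x y::nat. q^x = q^y \<longrightarrow> x = y" and d: "d > 0"
  shows "qp (q^d) (q^d) j \<noteq> 0"
proof (rule qp_nz)
  fix i
  have "q^d * (q^d)^i = q^(d + d*i)" by (simp add: power_add power_mult)
  moreover have "q^(d + d*i) \<noteq> q^0" using gq d by (metis add_gr_0 less_numeral_extra(3))
  ultimately show "q^d * (q^d)^i \<noteq> 1" by simp
qed

lemma qp_gen_nz:
  fixes q c :: "'a::field"
  assumes q: "q \<noteq> 0" and g: "\<forall>e::int. c * q powi e \<noteq> 1"
  shows "qp (c * q powi e0 * q^(2*d)) (q^(2*d)) k \<noteq> 0"
proof (rule qp_nz)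
  fix i
  have h: "c * q powi e0 * q^(2*d) * (q^(2*d))^i = c * q powi (e0 + int (2*d) + int (2*d*i))"
    using q by (simp add: mult.assoc powi_mult_pow power_mult[symmetric])
  show "c * q powi e0 * q^(2*d) * (q^(2*d))^i \<noteq> 1" unfolding h using g by blast
qed


lemma good1:
  fixes d n r s L :: nat
  assumes d: "d > 0" and n: "n > 0" and sn: "s \<le> n - 1" and L: "L \<le> n - 1"
    and par: "s \<le> L \<Longrightarrow> odd (L - s)"
  shows "evalhom.good (phi1 (r + d*L)) (Sgen d n r s var_a var_b var_q) 0"
proof -
  define \<alpha> where "\<alpha> = r + d*L"
  define q1 where "q1 = (to_fract qq :: rat poly poly fract)"
  define b1 where "b1 = (to_fract [:0,1:] :: rat poly poly fract)"
  define a1 where "a1 = inverse (q1 ^ \<alpha>)"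
  have E: "evalhom (phi1 \<alpha>)" by (rule evalhom_phi1)
  have ga: "evalhom.good (phi1 \<alpha>) var_a a1"
    using evalhom.good_to_fract[OF E, of "[:0,1:]"] unfolding var_a_eq phi1_X a1_def q1_def .
  have gb: "evalhom.good (phi1 \<alpha>) var_b b1"
    using evalhom.good_to_fract[OF E, of "[:[:0,1:]:]"] unfolding var_b_eq phi1_const b1_def .
  have gq: "evalhom.good (phi1 \<alpha>) var_q q1"
    using evalhom.good_to_fract[OF E, of "[:qq:]"] unfolding var_q_eq phi1_const q1_def .
  have q0: "q1 \<noteq> 0" unfolding q1_def using qq_nz by simp
  have ginj: "\<forall>x y::nat. q1^x = q1^y \<longrightarrow> x = y" unfolding q1_def by (rule q1_inj)
  have gen: "\<forall>e::int. b1 * q1 powi e \<noteq> 1"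
    unfolding b1_def q1_def qq_def using gen_var[of "[:0,1::rat:]"] by simp
  have a1e: "a1 = q1 powi (-(int r + int d * int L))"
  proof -
    have "int r + int d * int L = int \<alpha>" unfolding \<alpha>_def by simp
    hence "q1 powi (-(int r + int d * int L)) = inverse (q1 powi int \<alpha>)"
      by (simp only: power_int_minus)
    thus ?thesis unfolding a1_def by (simp only: power_int_of_nat)
  qed
  have den1: "\<And>j. qp (q1^d) (q1^d) j \<noteq> 0" by (rule qp_pow_nz[OF ginj d])
  have den2: "\<And>k. qp (a1*b1*q1^(2*d)) (q1^(2*d)) k \<noteq> 0"
  proof -
    fix k
    have h: "a1*b1*q1^(2*d) = b1 * q1 powi (-(int r + int d * int L)) * q1^(2*d)" unfolding a1e by (simp add: mult_ac)
    show "qp (a1*b1*q1^(2*d)) (q1^(2*d)) k \<noteq> 0" unfolding h by (rule qp_gen_nz[OF q0 gen])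
  qed
  have "evalhom.good (phi1 \<alpha>) (Sgen d n r s var_a var_b var_q) (Sgen d n r s a1 b1 q1)"
    by (rule evalhom.good_Sgen[OF E ga gb gq q0 den1 den2])
  moreover have "Sgen d n r s a1 b1 q1 = 0"
    by (rule Sgen_zero_a[OF q0 ginj gen d n sn a1e L par])
  ultimately show ?thesis unfolding \<alpha>_def by simp
qed

lemma good2:
  fixes d n r s L :: nat
  assumes d: "d > 0" and n: "n > 0" and sn: "s \<le> n - 1" and L: "L \<le> n - 1"
    and par: "s \<le> L \<Longrightarrow> odd (L - s)"
  shows "evalhom.good (phi2 (int d - int r + int d * int L)) (Sgen d n r s var_a var_b var_q) 0"
proof -
  define \<beta> where "\<beta> = int d - int r + int d * int L"
  define q2 where "q2 = (to_fract [:ww:] :: rat poly fract poly fract)"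
  define a2 where "a2 = (to_fract [:0,1:] :: rat poly fract poly fract)"
  define b2 where "b2 = (to_fract [:zb \<beta>:] :: rat poly fract poly fract)"
  have E: "evalhom (phi2 \<beta>)" by (rule evalhom_phi2)
  have ga: "evalhom.good (phi2 \<beta>) var_a a2"
    using evalhom.good_to_fract[OF E, of "[:0,1:]"] unfolding var_a_eq phi2_X a2_def .
  have gb: "evalhom.good (phi2 \<beta>) var_b b2"
    using evalhom.good_to_fract[OF E, of "[:[:0,1:]:]"] unfolding var_b_eq phi2_const psi_X b2_def .
  have gq: "evalhom.good (phi2 \<beta>) var_q q2"
    using evalhom.good_to_fract[OF E, of "[:qq:]"] unfolding var_q_eq phi2_const q2_def qq_def psi_const ww_def .
  have q0: "q2 \<noteq> 0" unfolding q2_def using ww_nz by simp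
  have ginj: "\<forall>x y::nat. q2^x = q2^y \<longrightarrow> x = y" unfolding q2_def by (rule q2_inj)
  have gen: "\<forall>e::int. a2 * q2 powi e \<noteq> 1"
    unfolding a2_def q2_def using gen_var[of ww] ww_nz by simp
  have b2e: "b2 = q2 powi (-(int d - int r + int d * int L))"
    unfolding b2_def q2_def zb_def \<beta>_def using to_fract_const_powi[OF ww_nz] by simp
  have den1: "\<And>j. qp (q2^d) (q2^d) j \<noteq> 0" by (rule qp_pow_nz[OF ginj d])
  have den2: "\<And>k. qp (a2*b2*q2^(2*d)) (q2^(2*d)) k \<noteq> 0"
  proof -
    fix k
    have h: "a2*b2*q2^(2*d) = a2 * q2 powi (-(int d - int r + int d * int L)) * q2^(2*d)" unfolding b2e by (simp add: mult_ac)
    show "qp (a2*b2*q2^(2*d)) (q2^(2*d)) k \<noteq> 0" unfolding h by (rule qp_gen_nz[OF q0 gen])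
  qed
  have "evalhom.good (phi2 \<beta>) (Sgen d n r s var_a var_b var_q) (Sgen d n r s a2 b2 q2)"
    by (rule evalhom.good_Sgen[OF E ga gb gq q0 den1 den2])
  moreover have "Sgen d n r s a2 b2 q2 = 0"
    by (rule Sgen_zero_b[OF q0 ginj gen d n sn b2e L par])
  ultimately show ?thesis unfolding \<beta>_def by simp
qed


lemma P1_eq:
  "1 - var_a * var_q powi int \<alpha> = emb [:1, -(qq^\<alpha>):]"
proof -
  have "var_a * var_q powi int \<alpha> = to_fract ([:0,1:] * [:qq:]^\<alpha>)"
    unfolding var_a_eq var_q_eq power_int_of_nat by (simp only: to_fract_mult to_fract_pow)
  also have "([:0,1:] :: mpoly3) * [:qq:]^\<alpha> = [:0, qq^\<alpha>:]" by (simp add: const_pow)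
  finally have "1 - var_a * var_q powi int \<alpha> = to_fract (1 - [:0, qq^\<alpha>:])" by simp
  also have "(1 :: mpoly3) - [:0, qq^\<alpha>:] = [:1, -(qq^\<alpha>):]" by (simp add: one_pCons)
  finally show ?thesis by (simp add: emb_to_fract)
qed

lemma P2_eq:
  fixes \<beta> :: int
  defines "M2 \<equiv> (if 0 \<le> \<beta> then 1 else [:[:[:0,1:]^nat (-\<beta>):]:] :: mpoly3)"
  shows "1 - var_b * var_q powi \<beta> = emb [:N2p \<beta>:] / emb M2 \<and> M2 \<noteq> 0"
proof (cases "0 \<le> \<beta>")
  case True
  define k where "k = nat \<beta>"
  have b: "\<beta> = int k" using True unfolding k_def by simp
  have "var_b * var_q powi \<beta> = to_fract ([:[:0,1:]:] * [:qq:]^k)"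
    unfolding var_b_eq var_q_eq b power_int_of_nat by (simp only: to_fract_mult to_fract_pow)
  also have "([:[:0,1:]:] :: mpoly3) * [:qq:]^k = [:[:0, [:0,1:]^k:]:]" by (simp add: const_pow qq_pow)
  finally have "1 - var_b * var_q powi \<beta> = to_fract (1 - [:[:0, [:0,1:]^k:]:])" by simp
  also have "(1 :: mpoly3) - [:[:0, [:0,1:]^k:]:] = [:N2p \<beta>:]"
    using True unfolding N2p_def k_def by (simp add: one_pCons)
  finally show ?thesis using True unfolding M2_def by (simp add: emb_to_fract)
next
  case False
  define k where "k = nat (-\<beta>)"
  have b: "\<beta> = - int k" using False unfolding k_def by simp
  have vq: "var_q ^ k = to_fract [:[:[:0,1:]^k:]:]" unfolding var_q_eq
    by (simp only: to_fract_pow[symmetric] const_pow qq_pow)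
  have nz: "var_q ^ k \<noteq> 0" unfolding vq by simp
  have "1 - var_b * var_q powi \<beta> = (var_q ^ k - var_b) / var_q ^ k"
    unfolding b using nz by (simp add: power_int_minus field_simps)
  also have "var_q ^ k - var_b = to_fract ([:[:[:0,1:]^k:]:] - [:[:0,1:]:])" unfolding vq var_b_eq by (simp only: to_fract_diff)
  also have "([:[:[:0,1:]^k:]:] - [:[:0,1:]:] :: mpoly3) = [:N2p \<beta>:]"
    using False unfolding N2p_def k_def by simp
  finally have h: "1 - var_b * var_q powi \<beta> = to_fract [:N2p \<beta>:] / var_q ^ k" .
  have m: "M2 = [:[:[:0,1:]^k:]:]" using False unfolding M2_def k_def by simp
  show ?thesis unfolding m emb_to_fract vq[symmetric] using h by simp
qed

theorem theorem1p1:
  fixes d n r s :: nat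
  assumes "d > 0" "n > 0" "r > 0" "coprime d n" "odd n"
    and "s \<le> n - 1"
    and "[int s = lres (- of_nat r / of_nat d) n + 1] (mod 2)"
  shows "rcong
    (\<Sum>k=s..n-1.
       qpoch (var_a * var_q powi int r) (var_q ^ d) k
       * qpoch (var_b * var_q powi (int d - int r)) (var_q ^ d) k
       * qpoch (var_q ^ d) (var_q ^ (2*d)) k * var_q ^ (d*k)
       / (qpoch (var_q ^ d) (var_q ^ d) (k - s) * qpoch (var_q ^ d) (var_q ^ d) (k + s)
          * qpoch (var_a * var_b * var_q ^ (2*d)) (var_q ^ (2*d)) k))
    0
    ((1 - var_a * var_q powi (int r + int d * lres (- of_nat r / of_nat d) n))
     * (1 - var_b * var_q powi (int d - int r + int d * lres ((of_nat r - of_nat d) / of_nat d) n)))"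
proof -
  note d = assms(1) and n = assms(2) and cop = assms(4) and oddn = assms(5) and sn = assms(6)
  define L1i where "L1i = lres (- of_nat r / of_nat d) n"
  define L2i where "L2i = lres ((of_nat r - of_nat d) / of_nat d) n"
  have LF: "0 \<le> L1i \<and> L1i < int n \<and> 0 \<le> L2i \<and> L2i < int n \<and> L1i + L2i = int n - 1"
    unfolding L1i_def L2i_def by (rule L_facts[OF d n cop])
  define L1 where "L1 = nat L1i"
  define L2 where "L2 = nat L2i"
  have L1e: "L1i = int L1" and L2e: "L2i = int L2" using LF unfolding L1_def L2_def by auto
  have L1n: "L1 \<le> n - 1" and L2n: "L2 \<le> n - 1" using LF L1e L2e by auto
  have cs: "int s mod 2 = (L1i + 1) mod 2" using assms(7) unfolding L1i_def by (simp add: cong_def)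
  have on: "int n mod 2 = 1" using oddn by presburger
  have par1: "s \<le> L1 \<Longrightarrow> odd (L1 - s)" using cs L1e by presburger
  have par2: "s \<le> L2 \<Longrightarrow> odd (L2 - s)" using cs L1e L2e LF on by presburger
  define \<alpha> where "\<alpha> = r + d * L1"
  define \<beta> where "\<beta> = int d - int r + int d * int L2"
  define S where "S = Sgen d n r s var_a var_b var_q"
  have g1: "evalhom.good (phi1 \<alpha>) S 0" unfolding S_def \<alpha>_def by (rule good1[OF d n sn L1n par1])
  have g2: "evalhom.good (phi2 \<beta>) S 0" unfolding S_def \<beta>_def by (rule good2[OF d n sn L2n par2])
  define N1 where "N1 = ([:1, -(qq^\<alpha>):] :: mpoly3)"
  define N2 where "N2 = ([:N2p \<beta>:] :: mpoly3)"
  have N1nz: "N1 \<noteq> 0" unfolding N1_def by simp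
  have N2pnz: "N2p \<beta> \<noteq> 0" unfolding N2p_def by simp
  have N2nz: "N2 \<noteq> 0" unfolding N2_def using N2pnz by simp
  have N12: "\<not> N1 dvd N2"
  proof
    assume "N1 dvd N2"
    hence "phi1 \<alpha> N2 = 0" unfolding N1_def using ker1 by blast
    thus False unfolding N2_def phi1_const using N2pnz by simp
  qed
  obtain X Y where XY: "Y \<noteq> 0" "S = Fract X Y" "N1 * N2 dvd X" "coprime Y (N1 * N2)"
    using extract_lem[OF evalhom_phi1 evalhom_phi2, of \<alpha> N1 \<beta> N2, OF _ _ N1nz N2nz N12 g1 g2]
      ker1 ker2 unfolding N1_def N2_def by blast
  define M2 where "M2 = (if 0 \<le> \<beta> then 1 else [:[:[:0,1:]^nat (-\<beta>):]:] :: mpoly3)"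
  have P2: "1 - var_b * var_q powi \<beta> = emb N2 / emb M2 \<and> M2 \<noteq> 0"
    unfolding N2_def M2_def by (rule P2_eq)
  have P1: "1 - var_a * var_q powi int \<alpha> = emb N1" unfolding N1_def by (rule P1_eq)
  have ea: "int r + int d * L1i = int \<alpha>" unfolding \<alpha>_def L1e by simp
  have eb: "int d - int r + int d * L2i = \<beta>" unfolding \<beta>_def L2e ..
  have SS: "(\<Sum>k=s..n-1.
       qpoch (var_a * var_q powi int r) (var_q ^ d) k
       * qpoch (var_b * var_q powi (int d - int r)) (var_q ^ d) k
       * qpoch (var_q ^ d) (var_q ^ (2*d)) k * var_q ^ (d*k)
       / (qpoch (var_q ^ d) (var_q ^ d) (k - s) * qpoch (var_q ^ d) (var_q ^ d) (k + s)
          * qpoch (var_a * var_b * var_q ^ (2*d)) (var_q ^ (2*d)) k)) = S"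
    unfolding S_def Sgen_def qpoch_qp ..
  obtain C' where C': "X = N1 * N2 * C'" using XY(3) by blast
  show ?thesis
    unfolding rcong_def SS L1i_def[symmetric] L2i_def[symmetric] ea eb P1 P2[THEN conjunct1]
  proof (intro exI conjI)
    show "M2 \<noteq> 0" using P2 by blast
    show "Y \<noteq> 0" by (rule XY(1))
    show "emb N1 * (emb N2 / emb M2) = emb (N1 * N2) / emb M2" by (simp add: emb_to_fract)
    show "coprime Y (N1 * N2)" by (rule XY(4))
    show "S - 0 = emb N1 * (emb N2 / emb M2) * emb (C' * M2) / emb Y"
      using P2 XY(1) unfolding XY(2) C' by (simp add: emb_to_fract Fract_conv_to_fract)
  qed
qed


end
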